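(* Let $(V_k)_{k=1,\dots,K}$ be an $(\varepsilon,\mu)$-admissible family for some $\varepsilon>0$ and $\mu\ge1$. Let $u\in V$ with $\operatorname{dist}(u,\mathcal M)\le\varepsilon_{model}$, and let $w=P_Wu+\eta$ with $\eta\in W$, $\|\eta\|\le\varepsilon_{noise}$. Let $\mathcal S:V\to[0,\infty)$ satisfy $r\operatorname{dist}(v,\mathcal M)\le\mathcal S(v)\le R\operatorname{dist}(v,\mathcal M)$ for all $v\in V$ with $0<r\le R$, and let $u^*(w)=u^*_{k^*}(w)$ where $k^*$ is any minimizer of $k\mapsto\mathcal S(u_k^*(w))$. Then $$\|u-u^*(w)\|\le\delta_{\kappa\rho}+\varepsilon_{noise},\qquad \rho=\mu(\varepsilon+\varepsilon_{noise})+(\mu+1)\varepsilon_{model},\quad\kappa=R/r.$$ The same estimate holds with $\kappa=1$ if instead $k^*$ is any minimizer of $k\mapsto\operatorname{dist}(u_k^*(w),\mathcal M)$.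
   Context: $V$ is a real Hilbert space, $\mathcal M\subset V$ is compact, $W\subset V$ is a subspace of finite dimension $m$, $P_W$ is the orthogonal projection onto $W$ and $W^\perp$ its orthogonal complement. For a linear subspace $\bar V$ with $\bar V\cap W^\perp=\{0\}$, $\mu(\bar V,W)=\max_{v\in\bar V,\,v\ne0}\|v\|/\|P_Wv\|$ (set $\mu(\{0\},W)=1$). A family of affine spaces $V_k=\bar u_k+\bar V_k$ ($\bar u_k\in V$, $\bar V_k$ linear of dimension $\le m$, $\bar V_k\cap W^\perp=\{0\}$), $k=1,\dots,K$, is $(\varepsilon,\mu)$-admissible if there is a partition $\mathcal M=\bigcup_{k=1}^K\mathcal M_k$ with $\sup_{u\in\mathcal M_k}\operatorname{dist}(u,V_k)\le\varepsilon$ and $\mu(\bar V_k,W)\le\mu$ for all $k$. The PBDW estimators are $u_k^*(w)=\operatorname{argmin}\{\operatorname{dist}(v,V_k): v\in w+W^\perp\}$. For $\sigma\ge0$, $\mathcal M_\sigma=\{v\in V:\operatorname{dist}(v,\mathcal M)\le\sigma\}$ and $\delta_\sigma=\sup\{\|u-v\|: u,v\in\mathcal M_\sigma,\ u-v\in W^\perp\}$. *)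

theory Defs
  imports "HOL-Analysis.Analysis"
begin

definition fin_dim_subspace :: "'v::real_vector set \<Rightarrow> bool" where
  "fin_dim_subspace S \<longleftrightarrow> subspace S \<and> (\<exists>B. finite B \<and> S = span B)"

definition orth_proj :: "'v::real_inner set \<Rightarrow> 'v \<Rightarrow> 'v" where
  "orth_proj W v = (THE p. p \<in> W \<and> v - p \<in> orthogonal_comp W)"

definition mu_stab :: "'v::real_inner set \<Rightarrow> 'v set \<Rightarrow> real" where
  "mu_stab Vb W = (if Vb = {0} then 1
     else Sup ((\<lambda>v. norm v / norm (orth_proj W v)) ` (Vb - {0})))"

definition affine_sp :: "'v::real_vector \<Rightarrow> 'v set \<Rightarrow> 'v set" where
  "affine_sp ub Vb = (\<lambda>x. ub + x) ` Vb"

definition admissible ::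
  "'v::real_inner set \<Rightarrow> 'v set \<Rightarrow> nat \<Rightarrow> nat \<Rightarrow> (nat \<Rightarrow> 'v) \<Rightarrow> (nat \<Rightarrow> 'v set)
     \<Rightarrow> real \<Rightarrow> real \<Rightarrow> bool" where
  "admissible M W m K ub Vb eps mu \<longleftrightarrow>
     (\<forall>k\<in>{1..K}. fin_dim_subspace (Vb k) \<and> dim (Vb k) \<le> m
                  \<and> Vb k \<inter> orthogonal_comp W = {0}) \<and>
     (\<exists>Mk :: nat \<Rightarrow> 'v set.
        M = (\<Union>k\<in>{1..K}. Mk k) \<and> disjoint_family_on Mk {1..K} \<and>
        (\<forall>k\<in>{1..K}. (\<forall>u\<in>Mk k. infdist u (affine_sp (ub k) (Vb k)) \<le> eps)
                    \<and> mu_stab (Vb k) W \<le> mu))"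

definition pbdw :: "'v::real_inner set \<Rightarrow> 'v \<Rightarrow> 'v set \<Rightarrow> 'v \<Rightarrow> 'v" where
  "pbdw W ub Vb w = (SOME v. v \<in> (\<lambda>z. w + z) ` orthogonal_comp W \<and>
      (\<forall>v'\<in>(\<lambda>z. w + z) ` orthogonal_comp W.
          infdist v (affine_sp ub Vb) \<le> infdist v' (affine_sp ub Vb)))"

definition fattened :: "'v::real_normed_vector set \<Rightarrow> real \<Rightarrow> 'v set" where
  "fattened M s = {v. infdist v M \<le> s}"

definition delta :: "'v::real_inner set \<Rightarrow> 'v set \<Rightarrow> real \<Rightarrow> real" where
  "delta M W s = Sup {norm (u - v) | u v. u \<in> fattened M s \<and> v \<in> fattened M s
                        \<and> u - v \<in> orthogonal_comp W}"

end

theory Submission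
  imports Defs
begin


lemma GS_step_fin:
  fixes S :: "'a::real_inner set"
  assumes fin: "finite S" and S: "pairwise orthogonal S" and x: "x \<in> span S"
  shows "orthogonal x (a - (\<Sum>b\<in>S. (b \<bullet> a / (b \<bullet> b)) *\<^sub>R b))"
proof -
  have "orthogonal (a - (\<Sum>b\<in>S. (b \<bullet> a / (b \<bullet> b)) *\<^sub>R b)) x"
       if "x \<in> S" for x
  proof -
    have "a \<bullet> x = (\<Sum>y\<in>S. if y = x then y \<bullet> a else 0)"
      by (simp add: fin inner_commute that)
    also have "\<dots> =  (\<Sum>b\<in>S. b \<bullet> a * (b \<bullet> x) / (b \<bullet> b))"
      apply (rule sum.cong [OF refl], simp)
      by (meson S orthogonal_def pairwise_def that)
   finally show ?thesis
     by (simp add: orthogonal_def algebra_simps inner_sum_left)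
  qed
  then show ?thesis
    using orthogonal_to_span orthogonal_commute x by blast
qed

lemma GS_exists:
  fixes B :: "'a::real_inner set"
  assumes "finite B"
  shows "\<exists>T. finite T \<and> pairwise orthogonal T \<and> 0 \<notin> T \<and> span T = span B"
  using assms
proof (induction B rule: finite_induct)
  case empty
  then show ?case by (intro exI[of _ "{}"]) auto
next
  case (insert a B)
  then obtain T where T: "finite T" "pairwise orthogonal T" "0 \<notin> T" "span T = span B" by blast
  define a' where "a' = a - (\<Sum>b\<in>T. (b \<bullet> a / (b \<bullet> b)) *\<^sub>R b)"
  have orth: "\<And>y. y \<in> T \<Longrightarrow> orthogonal a' y"
    using GS_step_fin[OF T(1) T(2)] a'_def orthogonal_commute span_base by blast
  have diff: "a' - a \<in> span T"
    unfolding a'_def by (simp add: span_neg span_sum span_base span_mul)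
  show ?case
  proof (cases "a' = 0")
    case True
    then have "a \<in> span T" using diff by (metis diff_0 span_neg minus_minus)
    then have "span (insert a B) = span B" using T(4)
      by (metis span_redundant)
    then show ?thesis using T by metis
  next
    case False
    have "span (insert a' T) = span (insert a T)"
      by (rule eq_span_insert_eq[OF diff])
    also have "\<dots> = span (insert a B)" using T(4)
      by (simp add: span_insert)
    finally show ?thesis
      using T False orth
      by (intro exI[of _ "insert a' T"]) (auto intro: pairwise_orthogonal_insert)
  qed
qed

lemma proj_exists:
  fixes B :: "'a::real_inner set"
  assumes "finite B"
  shows "\<exists>p\<in>span B. \<forall>y\<in>span B. inner (x - p) y = 0"
proof -
  obtain T where T: "finite T" "pairwise orthogonal T" "0 \<notin> T" "span T = span B"
    using GS_exists[OF assms] by blast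
  define p where "p = (\<Sum>b\<in>T. (b \<bullet> x / (b \<bullet> b)) *\<^sub>R b)"
  have "p \<in> span B" unfolding p_def T(4)[symmetric]
    by (simp add: span_sum span_base span_mul)
  moreover have "\<forall>y\<in>span B. inner (x - p) y = 0"
    using GS_step_fin[OF T(1) T(2)] T(4) unfolding p_def orthogonal_def
    by (metis inner_commute)
  ultimately show ?thesis by blast
qed

lemma proj_nearest:
  fixes x p y :: "'a::real_inner"
  assumes "inner (x - p) (p - y) = 0"
  shows "norm (x - p) \<le> norm (x - y)"
proof -
  have "x - y = (x - p) + (p - y)" by simp
  then have "(norm (x - y))\<^sup>2 = (norm (x - p))\<^sup>2 + (norm (p - y))\<^sup>2"
    using assms by (metis norm_add_Pythagorean orthogonal_def) 
  then show ?thesis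
    by (metis abs_norm_cancel le_add_same_cancel1 real_sqrt_abs real_sqrt_le_iff zero_le_power2)
qed



lemma perp_unique:
  fixes W :: "'a::real_inner set"
  assumes "subspace W" "p \<in> W" "x - p \<in> orthogonal_comp W" "q \<in> W" "x - q \<in> orthogonal_comp W"
  shows "p = q"
proof -
  have "p - q \<in> W" using assms by (simp add: subspace_diff)
  moreover have "p - q \<in> orthogonal_comp W"
    using subspace_diff[OF subspace_orthogonal_comp assms(5) assms(3)] by simp
  ultimately have "inner (p - q) (p - q) = 0" by (auto simp: orthogonal_comp_def orthogonal_def)
  then show ?thesis by simp
qed

lemma P_ex:
  fixes W :: "'a::real_inner set"
  assumes "fin_dim_subspace W"
  shows "\<exists>p. p \<in> W \<and> x - p \<in> orthogonal_comp W"
proof -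
  obtain B where B: "finite B" "W = span B" using assms by (auto simp: fin_dim_subspace_def)
  obtain p where "p \<in> span B" "\<forall>y\<in>span B. inner (x - p) y = 0" using proj_exists[OF B(1)] by blast
  then show ?thesis using B by (auto simp: orthogonal_comp_def orthogonal_def inner_commute)
qed

lemma P_prop:
  fixes W :: "'a::real_inner set"
  assumes "fin_dim_subspace W"
  shows "orth_proj W x \<in> W \<and> x - orth_proj W x \<in> orthogonal_comp W"
proof -
  have sW: "subspace W" using assms by (simp add: fin_dim_subspace_def)
  obtain p where p: "p \<in> W \<and> x - p \<in> orthogonal_comp W" using P_ex[OF assms] by blast
  show ?thesis unfolding orth_proj_def
    by (rule theI[of _ p]) (use p perp_unique[OF sW] in blast)+
qed

lemma P_unique:
  fixes W :: "'a::real_inner set"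
  assumes "fin_dim_subspace W" "p \<in> W" "x - p \<in> orthogonal_comp W"
  shows "orth_proj W x = p"
  using perp_unique[of W "orth_proj W x" x p] P_prop[OF assms(1), of x] assms
  by (auto simp: fin_dim_subspace_def)

lemma perp_inner: "a \<in> W \<Longrightarrow> b \<in> orthogonal_comp W \<Longrightarrow> inner a b = 0"
  by (auto simp: orthogonal_comp_def orthogonal_def)

locale PW =
  fixes W :: "'a::real_inner set"
  assumes fdW: "fin_dim_subspace W"
begin

abbreviation P where "P \<equiv> orth_proj W"

lemma sW: "subspace W" using fdW by (simp add: fin_dim_subspace_def)
lemma sWp: "subspace (orthogonal_comp W)" by (rule subspace_orthogonal_comp)

lemma PinW: "P x \<in> W" using P_prop[OF fdW] by blast
lemma Pperp: "x - P x \<in> orthogonal_comp W" using P_prop[OF fdW] by blast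

lemma P_add: "P (x + y) = P x + P y"
  apply (rule P_unique[OF fdW])
  using PinW sW subspace_add apply blast
  using subspace_add[OF sWp Pperp[of x] Pperp[of y]] by (simp add: algebra_simps)

lemma P_scale: "P (c *\<^sub>R x) = c *\<^sub>R P x"
  apply (rule P_unique[OF fdW])
  using PinW sW subspace_scale apply blast
  using subspace_scale[OF sWp Pperp[of x], of c] by (simp add: algebra_simps)

lemma P_linear: "linear P"
  by (rule linearI) (simp_all add: P_add P_scale)

lemma P_diff: "P (x - y) = P x - P y"
  using linear_diff[OF P_linear] .

lemma P_W: "x \<in> W \<Longrightarrow> P x = x"
  by (rule P_unique[OF fdW]) (auto simp: sWp subspace_0)

lemma P_perp: "x \<in> orthogonal_comp W \<Longrightarrow> P x = 0"
  by (rule P_unique[OF fdW]) (auto simp: sW subspace_0)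

lemma P_zero_iff: "P x = 0 \<longleftrightarrow> x \<in> orthogonal_comp W"
  using Pperp[of x] P_perp by force

lemma pyth: "(norm x)\<^sup>2 = (norm (P x))\<^sup>2 + (norm (x - P x))\<^sup>2"
proof -
  have "inner (P x) (x - P x) = 0" using perp_inner[OF PinW Pperp] .
  then show ?thesis using norm_add_Pythagorean[of "P x" "x - P x"]
    by (simp add: orthogonal_def)
qed

lemma P_norm_le: "norm (P x) \<le> norm x"
  using pyth[of x] by (metis abs_norm_cancel le_add_same_cancel1 real_sqrt_abs real_sqrt_le_iff zero_le_power2)

lemma pyth2: "a \<in> W \<Longrightarrow> b \<in> orthogonal_comp W \<Longrightarrow> (norm (a + b))\<^sup>2 = (norm a)\<^sup>2 + (norm b)\<^sup>2"
  using perp_inner norm_add_Pythagorean orthogonal_def by blast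

end



lemma expand_orth:
  fixes T :: "'a::real_inner set"
  assumes T: "finite T" "pairwise orthogonal T" and y: "y \<in> span T"
  shows "y = (\<Sum>b\<in>T. (b \<bullet> y / (b \<bullet> b)) *\<^sub>R b)"
proof -
  let ?d = "y - (\<Sum>b\<in>T. (b \<bullet> y / (b \<bullet> b)) *\<^sub>R b)"
  have "?d \<in> span T" using y by (simp add: span_diff span_sum span_base span_mul)
  then have "orthogonal ?d ?d" using GS_step_fin[OF T] by blast
  then show ?thesis by (simp add: orthogonal_def)
qed

context PW begin

lemma bdd_ratio:
  assumes B: "finite B" and int: "span B \<inter> orthogonal_comp W = {0}"
  shows "\<exists>C\<ge>0. \<forall>y\<in>span B. norm y \<le> C * norm (P y)"
proof -
  obtain T where T: "finite T" "pairwise orthogonal T" "0 \<notin> T" "span T = span (P ` B)"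
    using GS_exists[of "P ` B"] B by blast
  have img: "span (P ` B) = P ` span B" using span_linear_image[OF P_linear] by simp
  have "\<forall>t\<in>T. \<exists>x\<in>span B. P x = t"
    using T(4) img span_base by (metis imageE)
  then obtain xt where xt: "\<And>t. t \<in> T \<Longrightarrow> xt t \<in> span B \<and> P (xt t) = t" by metis
  define C where "C = (\<Sum>t\<in>T. norm (xt t) / norm t)"
  have C0: "C \<ge> 0" unfolding C_def by (auto intro: sum_nonneg)
  have "norm y \<le> C * norm (P y)" if y: "y \<in> span B" for y
  proof -
    have Py: "P y \<in> span T" using T(4) img y by auto
    define c where "c t = t \<bullet> P y / (t \<bullet> t)" for t
    have e: "P y = (\<Sum>t\<in>T. c t *\<^sub>R t)" unfolding c_def using expand_orth[OF T(1,2) Py] .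
    define x' where "x' = (\<Sum>t\<in>T. c t *\<^sub>R xt t)"
    have x'B: "x' \<in> span B" unfolding x'_def using xt by (simp add: span_sum span_mul)
    have "P x' = (\<Sum>t\<in>T. c t *\<^sub>R P (xt t))" unfolding x'_def
      by (simp add: linear_sum[OF P_linear] P_scale)
    also have "\<dots> = (\<Sum>t\<in>T. c t *\<^sub>R t)" by (rule sum.cong) (simp_all add: xt)
    also have "\<dots> = P y" using e by simp
    finally have "P (y - x') = 0" by (simp add: P_diff)
    then have "y - x' \<in> orthogonal_comp W" using P_zero_iff by blast
    moreover have "y - x' \<in> span B" using x'B y by (simp add: span_diff)
    ultimately have "y - x' \<in> span B \<inter> orthogonal_comp W" by blast
    then have "y - x' = 0" using int by blast
    then have yx: "y = x'" by simp
    have "norm x' \<le> (\<Sum>t\<in>T. norm (c t *\<^sub>R xt t))" unfolding x'_def by (rule norm_sum)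
    also have "\<dots> \<le> (\<Sum>t\<in>T. norm (P y) * (norm (xt t) / norm t))"
    proof (rule sum_mono)
      fix t assume t: "t \<in> T"
      then have tn: "norm t > 0" using T(3) by auto
      have tt: "t \<bullet> t = (norm t)\<^sup>2" by (simp add: power2_norm_eq_inner)
      have "\<bar>c t\<bar> = \<bar>t \<bullet> P y\<bar> / (norm t)\<^sup>2" unfolding c_def tt by simp
      also have "\<dots> \<le> norm t * norm (P y) / (norm t)\<^sup>2"
        by (rule divide_right_mono[OF Cauchy_Schwarz_ineq2]) simp
      also have "\<dots> = norm (P y) / norm t" using tn by (simp add: power2_eq_square)
      finally have "\<bar>c t\<bar> \<le> norm (P y) / norm t" .
      then have "\<bar>c t\<bar> * norm (xt t) \<le> norm (P y) / norm t * norm (xt t)"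
        by (rule mult_right_mono) simp
      then show "norm (c t *\<^sub>R xt t) \<le> norm (P y) * (norm (xt t) / norm t)" by simp
    qed
    also have "\<dots> = C * norm (P y)" unfolding C_def by (simp add: sum_distrib_left mult.commute)
    finally show ?thesis using yx by simp
  qed
  then show ?thesis using C0 by blast
qed

lemma mu_bound:
  assumes B: "finite B" and Vb: "Vb = span B" and int: "Vb \<inter> orthogonal_comp W = {0}"
    and mus: "mu_stab Vb W \<le> mu" and mu: "mu \<ge> 1" and x: "x \<in> Vb"
  shows "norm x \<le> mu * norm (P x)"
proof (cases "x = 0")
  case True then show ?thesis using mu by simp
next
  case False
  then have nz: "Vb \<noteq> {0}" using x by auto
  have Px: "P x \<noteq> 0" using False x int P_zero_iff by auto
  obtain C where C: "C \<ge> 0" "\<forall>y\<in>span B. norm y \<le> C * norm (P y)"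
    using bdd_ratio[OF B] int Vb by blast
  have bdd: "bdd_above ((\<lambda>v. norm v / norm (P v)) ` (Vb - {0}))"
  proof (rule bdd_aboveI2)
    fix v assume "v \<in> Vb - {0}"
    then have v: "norm v \<le> C * norm (P v)" "P v \<noteq> 0" using C Vb int P_zero_iff by auto
    then show "norm v / norm (P v) \<le> C"
      by (simp add: divide_le_eq)
  qed
  have "norm x / norm (P x) \<le> mu_stab Vb W"
    unfolding mu_stab_def using nz False x by simp (rule cSup_upper[OF _ bdd], auto)
  then have "norm x / norm (P x) \<le> mu" using mus by simp
  then show ?thesis using Px by (simp add: divide_le_eq mult.commute)
qed

end


lemma tangent_bound:
  fixes g q :: "'a::real_inner"
  assumes H: "\<And>t. norm (g - q) \<le> norm (g - t *\<^sub>R q)"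
  shows "norm q \<le> norm g"
proof (cases "q = 0")
  case True then show ?thesis by simp
next
  case False
  define p where "p = q \<bullet> q"
  define c where "c = g \<bullet> q"
  have p0: "p > 0" using False unfolding p_def by simp
  have sq: "(norm (g - t *\<^sub>R q))\<^sup>2 = g \<bullet> g - 2 * t * c + t\<^sup>2 * p" for t
    unfolding power2_norm_eq_inner p_def c_def
    by (simp add: inner_diff_left inner_diff_right inner_commute power2_eq_square algebra_simps)
  have "(norm (g - 1 *\<^sub>R q))\<^sup>2 \<le> (norm (g - (c/p) *\<^sub>R q))\<^sup>2"
    using H[of "c/p"] by (simp add: power_mono)
  then have "g \<bullet> g - 2 * c + p \<le> g \<bullet> g - 2 * (c/p) * c + (c/p)\<^sup>2 * p"
    unfolding sq by simp
  then have "p - 2 * c \<le> - (c * c) / p"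
    using p0 by (simp add: power2_eq_square field_simps)
  then have "p * (p - 2 * c) \<le> - (c * c)"
    using p0 by (simp add: field_simps)
  then have "(p - c)\<^sup>2 \<le> 0" by (simp add: power2_eq_square algebra_simps)
  then have pc: "p = c" by simp
  have "(norm q)\<^sup>2 = p" unfolding p_def by (simp add: power2_norm_eq_inner)
  also have "\<dots> \<le> \<bar>c\<bar>" using pc by simp
  also have "\<dots> \<le> norm g * norm q" unfolding c_def by (rule Cauchy_Schwarz_ineq2)
  finally have "norm q * norm q \<le> norm g * norm q" by (simp add: power2_eq_square)
  then show ?thesis using False by simp
qed

lemma final_arith:
  fixes N Q X Bt Pi Al G eps gam mu :: real
  assumes N2: "N\<^sup>2 = Q\<^sup>2 + G\<^sup>2" and QX: "Q \<le> X + Bt" and X2: "X\<^sup>2 \<le> (mu\<^sup>2 - 1) * Pi\<^sup>2"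
    and Pi: "Pi \<le> Al + G" and AB: "Al\<^sup>2 + Bt\<^sup>2 \<le> eps\<^sup>2" and Gg: "G \<le> gam"
    and nn: "N \<ge> 0" "Q \<ge> 0" "X \<ge> 0" "Bt \<ge> 0" "Pi \<ge> 0" "Al \<ge> 0" "G \<ge> 0" "eps \<ge> 0"
    and mu: "mu \<ge> 1"
  shows "N \<le> mu * (eps + gam)"
proof -
  define s where "s = sqrt (mu\<^sup>2 - 1)"
  have mu2: "mu\<^sup>2 \<ge> 1" using one_le_power[OF mu] .
  have s0: "s \<ge> 0" unfolding s_def using mu2 by simp
  have s2: "s\<^sup>2 = mu\<^sup>2 - 1" unfolding s_def using mu2 by simp
  have smu: "s \<le> mu"
    by (rule power2_le_imp_le) (use s2 mu in auto)
  have "X\<^sup>2 \<le> (s * Pi)\<^sup>2" using X2 s2 by (simp add: power_mult_distrib)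
  then have Xs: "X \<le> s * Pi" by (rule power2_le_imp_le) (use s0 nn in auto)
  have "s * Pi \<le> s * Al + s * G" using Pi s0 by (metis distrib_left mult_left_mono)
  then have Q1: "Q \<le> (s * Al + Bt) + s * G" using QX Xs by linarith
  define Aa where "Aa = s * Al + Bt"
  have Aa0: "Aa \<ge> 0" unfolding Aa_def using s0 nn by simp
  have "Aa\<^sup>2 + (s * Bt - Al)\<^sup>2 = (s\<^sup>2 + 1) * (Al\<^sup>2 + Bt\<^sup>2)"
    unfolding Aa_def by (simp add: power2_eq_square algebra_simps)
  then have "Aa\<^sup>2 + (s * Bt - Al)\<^sup>2 = mu\<^sup>2 * (Al\<^sup>2 + Bt\<^sup>2)" using s2 by simp
  then have "Aa\<^sup>2 \<le> mu\<^sup>2 * (Al\<^sup>2 + Bt\<^sup>2)"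
    using zero_le_power2[of "s * Bt - Al"] by linarith
  also have "\<dots> \<le> mu\<^sup>2 * eps\<^sup>2" by (rule mult_left_mono[OF AB]) simp
  also have "\<dots> = (mu * eps)\<^sup>2" by (simp add: power_mult_distrib)
  finally have "Aa\<^sup>2 \<le> (mu * eps)\<^sup>2" .
  then have Aa: "Aa \<le> mu * eps" by (rule power2_le_imp_le) (use mu nn(8) in simp)
  have Q0: "Q \<le> Aa + s * G" using Q1 Aa_def by simp
  have "Q\<^sup>2 \<le> (Aa + s * G)\<^sup>2" by (rule power_mono[OF Q0 nn(2)])
  then have "N\<^sup>2 \<le> (Aa + s * G)\<^sup>2 + G\<^sup>2" using N2 by simp
  also have "\<dots> = Aa\<^sup>2 + 2 * Aa * (s * G) + (s\<^sup>2 + 1) * G\<^sup>2"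
    by (simp add: power2_eq_square algebra_simps)
  also have "\<dots> = Aa\<^sup>2 + 2 * Aa * (s * G) + mu\<^sup>2 * G\<^sup>2"
    using s2 by simp
  also have "\<dots> \<le> (mu * eps)\<^sup>2 + 2 * (mu * eps) * (mu * G) + mu\<^sup>2 * G\<^sup>2"
  proof -
    have "Aa\<^sup>2 \<le> (mu * eps)\<^sup>2" by (rule power_mono[OF Aa Aa0])
    moreover have "Aa * (s * G) \<le> (mu * eps) * (mu * G)"
    proof (rule mult_mono[OF Aa])
      show "s * G \<le> mu * G" using smu nn(7) by (rule mult_right_mono)
      show "0 \<le> mu * eps" using mu nn(8) by simp
      show "0 \<le> s * G" using s0 nn(7) by simp
    qed
    ultimately show ?thesis by linarith
  qed
  also have "\<dots> = (mu * (eps + G))\<^sup>2" by (simp add: power2_eq_square algebra_simps)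
  finally have "N\<^sup>2 \<le> (mu * (eps + G))\<^sup>2" .
  then have "N \<le> mu * (eps + G)" by (rule power2_le_imp_le) (use mu nn(7,8) in simp)
  also have "\<dots> \<le> mu * (eps + gam)" using Gg mu by simp
  finally show ?thesis .
qed



lemma infdist_nearest:
  assumes b: "b \<in> A" and H: "\<And>a. a \<in> A \<Longrightarrow> norm (x - b) \<le> norm (x - a)"
  shows "infdist x A = norm (x - b)"
proof (rule antisym)
  show "infdist x A \<le> norm (x - b)" using infdist_le[OF b, of x] by (simp add: dist_norm)
  have "A \<noteq> {}" using b by blast
  then show "norm (x - b) \<le> infdist x A"
    unfolding infdist_notempty[OF \<open>A \<noteq> {}\<close>]
    by (rule cINF_greatest) (simp add: dist_norm H)
qed

lemma aff_mem: "a \<in> affine_sp ub Vb \<longleftrightarrow> (\<exists>y\<in>Vb. a = ub + y)"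
  by (auto simp: affine_sp_def)

lemma nearest_exists:
  fixes B :: "'a::real_inner set"
  assumes B: "finite B"
  shows "\<exists>b\<in>affine_sp ub (span B). infdist x (affine_sp ub (span B)) = norm (x - b)"
proof -
  obtain p where p: "p \<in> span B" "\<forall>y\<in>span B. inner ((x - ub) - p) y = 0"
    using proj_exists[OF B] by blast
  have bA: "ub + p \<in> affine_sp ub (span B)" using p(1) by (auto simp: aff_mem)
  have "norm (x - (ub + p)) \<le> norm (x - a)" if a: "a \<in> affine_sp ub (span B)" for a
  proof -
    obtain y where y: "y \<in> span B" "a = ub + y" using a by (auto simp: aff_mem)
    have "p - y \<in> span B" using p(1) y(1) by (simp add: span_diff)
    then have "inner ((x - ub) - p) (p - y) = 0" using p(2) by blast
    then have "norm ((x - ub) - p) \<le> norm ((x - ub) - y)" by (rule proj_nearest)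
    then show ?thesis using y by (simp add: algebra_simps)
  qed
  then show ?thesis using infdist_nearest[OF bA] bA by blast
qed

context PW begin

lemma img_span: "span (P ` B) = P ` span B"
  using span_linear_image[OF P_linear] by simp

lemma pbdw_exists:
  assumes B: "finite B" and w: "w \<in> W"
  shows "\<exists>v. v \<in> (\<lambda>z. w + z) ` orthogonal_comp W \<and>
      (\<forall>v'\<in>(\<lambda>z. w + z) ` orthogonal_comp W.
          infdist v (affine_sp ub (span B)) \<le> infdist v' (affine_sp ub (span B)))"
proof -
  let ?A = "affine_sp ub (span B)"
  define g where "g = w - P ub"
  obtain p where p: "p \<in> span (P ` B)" "\<forall>q\<in>span (P ` B). inner (g - p) q = 0"
    using proj_exists[of "P ` B" g] B by blast
  obtain ys where ys: "ys \<in> span B" "p = P ys" using p(1) img_span by auto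
  define as where "as = ub + ys"
  define v0 where "v0 = as + (w - P as)"
  have Pas: "P as = P ub + p" unfolding as_def ys(2) by (simp add: P_add)
  have v0m: "v0 \<in> (\<lambda>z. w + z) ` orthogonal_comp W"
    using Pperp[of as] unfolding v0_def by (intro image_eqI[of _ _ "as - P as"]) (auto simp: algebra_simps)
  have asA: "as \<in> ?A" unfolding as_def using ys(1) by (auto simp: aff_mem)
  have "infdist v0 ?A \<le> norm (v0 - as)" using infdist_le[OF asA, of v0] by (simp add: dist_norm)
  also have "\<dots> = norm (g - p)" unfolding v0_def g_def Pas by (simp add: algebra_simps)
  finally have v0d: "infdist v0 ?A \<le> norm (g - p)" .
  have "infdist v0 ?A \<le> infdist v' ?A" if v': "v' \<in> (\<lambda>z. w + z) ` orthogonal_comp W" for v'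
  proof -
    obtain z' where z': "z' \<in> orthogonal_comp W" "v' = w + z'" using v' by blast
    have Pv': "P v' = w" using z' w by (simp add: P_add P_W P_perp)
    obtain b where b: "b \<in> ?A" "infdist v' ?A = norm (v' - b)" using nearest_exists[OF B] by blast
    obtain y where y: "y \<in> span B" "b = ub + y" using b(1) by (auto simp: aff_mem)
    have "p - P y \<in> span (P ` B)" using p(1) y(1) img_span span_diff[of p "P ` B" "P y"] by auto
    then have "inner (g - p) (p - P y) = 0" using p(2) by blast
    then have "norm (g - p) \<le> norm (g - P y)" by (rule proj_nearest)
    also have "\<dots> = norm (P (v' - b))" unfolding g_def P_diff Pv' y(2) P_add by (simp add: algebra_simps)
    also have "\<dots> \<le> norm (v' - b)" by (rule P_norm_le)
    finally show ?thesis using v0d b(2) by linarith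
  qed
  then show ?thesis using v0m by blast
qed

lemma pbdw_prop:
  assumes B: "finite B" and w: "w \<in> W"
  shows "pbdw W ub (span B) w \<in> (\<lambda>z. w + z) ` orthogonal_comp W \<and>
      (\<forall>v'\<in>(\<lambda>z. w + z) ` orthogonal_comp W.
          infdist (pbdw W ub (span B) w) (affine_sp ub (span B)) \<le> infdist v' (affine_sp ub (span B)))"
  unfolding pbdw_def by (rule someI_ex[OF pbdw_exists[OF B w]])

end


context PW begin

lemma est_bound:
  assumes B: "finite B" and Vbd: "\<And>x. x \<in> span B \<Longrightarrow> norm x \<le> mu * norm (P x)"
    and mu: "mu \<ge> 1" and w: "w \<in> W"
    and vs: "vs \<in> (\<lambda>z. w + z) ` orthogonal_comp W"
    and vmin: "\<forall>v'\<in>(\<lambda>z. w + z) ` orthogonal_comp W.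
          infdist vs (affine_sp ub (span B)) \<le> infdist v' (affine_sp ub (span B))"
    and zA: "infdist z (affine_sp ub (span B)) \<le> eps" and zw: "norm (w - P z) \<le> gam"
  shows "norm (vs - z) \<le> mu * (eps + gam)"
proof -
  let ?A = "affine_sp ub (span B)"
  obtain z' where z': "z' \<in> orthogonal_comp W" "vs = w + z'" using vs by blast
  have Pvs: "P vs = w" using z' w by (simp add: P_add P_W P_perp)
  obtain as where as: "as \<in> ?A" "infdist vs ?A = norm (vs - as)" using nearest_exists[OF B] by blast
  obtain ys where ys: "ys \<in> span B" "as = ub + ys" using as(1) by (auto simp: aff_mem)
  have memW: "a + (w - P a) \<in> (\<lambda>z. w + z) ` orthogonal_comp W" for a
    using Pperp[of a] by (intro image_eqI[of _ _ "a - P a"]) (auto simp: algebra_simps)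
  have key: "infdist vs ?A \<le> norm (w - P a)" if a: "a \<in> ?A" for a
  proof -
    have "infdist vs ?A \<le> infdist (a + (w - P a)) ?A" using vmin memW by blast
    also have "\<dots> \<le> dist (a + (w - P a)) a" by (rule infdist_le[OF a])
    also have "\<dots> = norm (w - P a)" by (simp add: dist_norm)
    finally show ?thesis .
  qed
  define d where "d = vs - as"
  have Pd: "P d = w - P as" unfolding d_def by (simp add: P_diff Pvs)
  have "norm d \<le> norm (P d)" using key[OF as(1)] as(2) Pd d_def by simp
  then have "(norm d)\<^sup>2 \<le> (norm (P d))\<^sup>2" by (simp add: power_mono)
  then have "(norm (d - P d))\<^sup>2 \<le> 0" using pyth[of d] by linarith
  then have "d = P d" by simp
  then have vs_eq: "vs = as + (w - P as)" using Pd d_def by (metis add_diff_cancel_left' diff_add_cancel)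
  have opt: "norm (w - P as) \<le> norm (w - P a)" if "a \<in> ?A" for a
    using key[OF that] as(2) vs_eq by simp
  obtain b where b: "b \<in> ?A" "infdist z ?A = norm (z - b)" using nearest_exists[OF B] by blast
  obtain yb where yb: "yb \<in> span B" "b = ub + yb" using b(1) by (auto simp: aff_mem)
  define e where "e = z - b"
  define x where "x = ys - yb"
  define om where "om = w - P z"
  define g where "g = w - P b"
  have xB: "x \<in> span B" unfolding x_def using ys(1) yb(1) by (simp add: span_diff)
  have ge: "g = P e + om" unfolding g_def e_def om_def by (simp add: P_diff)
  have asx: "as = b + x" unfolding x_def ys(2) yb(2) by simp
  have tang: "norm (g - P x) \<le> norm (g - t *\<^sub>R P x)" for t
  proof -
    have "b + t *\<^sub>R x \<in> ?A" unfolding yb(2) using xB yb(1)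
      by (auto simp: aff_mem intro!: bexI[of _ "yb + t *\<^sub>R x"] span_add span_mul)
    then have "norm (w - P as) \<le> norm (w - P (b + t *\<^sub>R x))" by (rule opt)
    then show ?thesis unfolding asx g_def by (simp add: P_add P_scale algebra_simps)
  qed
  have Px_g: "norm (P x) \<le> norm g" using tangent_bound[of g "P x"] tang by blast
  define q where "q = (x - e) - P (x - e)"
  have qperp: "q \<in> orthogonal_comp W" unfolding q_def by (rule Pperp)
  have omW: "om \<in> W" unfolding om_def using w PinW sW subspace_diff by blast
  have decomp: "vs - z = om + q"
    unfolding vs_eq q_def om_def asx e_def by (simp add: P_diff P_add algebra_simps)
  have N2: "(norm (vs - z))\<^sup>2 = (norm q)\<^sup>2 + (norm om)\<^sup>2"
    unfolding decomp using pyth2[OF omW qperp] by simp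
  have "q = (x - P x) - (e - P e)" unfolding q_def by (simp add: P_diff)
  then have QX: "norm q \<le> norm (x - P x) + norm (e - P e)"
    using norm_triangle_ineq4 by metis
  have xb: "norm x \<le> mu * norm (P x)" by (rule Vbd[OF xB])
  have "(norm x)\<^sup>2 \<le> (mu * norm (P x))\<^sup>2" using xb by (simp add: power_mono)
  then have X2: "(norm (x - P x))\<^sup>2 \<le> (mu\<^sup>2 - 1) * (norm (P x))\<^sup>2"
    using pyth[of x] by (simp add: power_mult_distrib algebra_simps)
  have PiB: "norm (P x) \<le> norm (P e) + norm om"
    using Px_g norm_triangle_ineq[of "P e" om] unfolding ge by linarith
  have AB: "(norm (P e))\<^sup>2 + (norm (e - P e))\<^sup>2 \<le> eps\<^sup>2"
  proof -
    have "norm e \<le> eps" using zA b(2) e_def by simp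
    then have "(norm e)\<^sup>2 \<le> eps\<^sup>2" by (simp add: power_mono)
    then show ?thesis using pyth[of e] by simp
  qed
  have eps0: "eps \<ge> 0" using zA infdist_nonneg order.trans by blast
  show ?thesis
    by (rule final_arith[OF N2 QX X2 PiB AB]) (use zw om_def eps0 mu in simp_all)
qed

end


lemma compact_nearest:
  fixes M :: "'a::real_normed_vector set"
  assumes "compact M" "M \<noteq> {}"
  shows "\<exists>m\<in>M. infdist x M = norm (x - m)"
proof -
  have "continuous_on M (\<lambda>y. dist x y)" by (intro continuous_intros)
  then obtain m where m: "m \<in> M" "\<forall>y\<in>M. dist x m \<le> dist x y"
    using continuous_attains_inf[OF assms] by blast
  then show ?thesis using infdist_nearest[of m M x] by (auto simp: dist_norm)
qed

theorem theorem3p4: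
  fixes M W :: "'v::{real_inner, complete_space} set"
    and m K :: nat and ub :: "nat \<Rightarrow> 'v" and Vb :: "nat \<Rightarrow> 'v set"
    and eps mu eps_model eps_noise r R :: real
    and u eta :: 'v and S :: "'v \<Rightarrow> real"
  assumes M: "compact M" "M \<noteq> {}"
    and W: "fin_dim_subspace W" "dim W = m"
    and adm: "admissible M W m K ub Vb eps mu"
    and eps: "eps > 0" and mu: "mu \<ge> 1"
    and u: "infdist u M \<le> eps_model"
    and eta: "eta \<in> W" "norm eta \<le> eps_noise"
    and S_nonneg: "\<And>v. S v \<ge> 0"
    and S_bounds: "\<And>v. r * infdist v M \<le> S v" "\<And>v. S v \<le> R * infdist v M"
    and rR: "0 < r" "r \<le> R"
  defines "w \<equiv> orth_proj W u + eta"
    and "\<rho> \<equiv> mu * (eps + eps_noise) + (mu + 1) * eps_model"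
  shows "(\<forall>kstar\<in>{1..K}.
            (\<forall>k\<in>{1..K}. S (pbdw W (ub kstar) (Vb kstar) w) \<le> S (pbdw W (ub k) (Vb k) w))
            \<longrightarrow> norm (u - pbdw W (ub kstar) (Vb kstar) w)
                  \<le> delta M W ((R / r) * \<rho>) + eps_noise)
       \<and> (\<forall>kstar\<in>{1..K}.
            (\<forall>k\<in>{1..K}. infdist (pbdw W (ub kstar) (Vb kstar) w) M
                          \<le> infdist (pbdw W (ub k) (Vb k) w) M)
            \<longrightarrow> norm (u - pbdw W (ub kstar) (Vb kstar) w)
                  \<le> delta M W (1 * \<rho>) + eps_noise)"
proof -
  interpret PW W using W(1) by unfold_locales
  have admk: "\<forall>k\<in>{1..K}. fin_dim_subspace (Vb k) \<and> dim (Vb k) \<le> m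
                  \<and> Vb k \<inter> orthogonal_comp W = {0}"
    using adm unfolding admissible_def by blast
  obtain Mk where Mk: "M = (\<Union>k\<in>{1..K}. Mk k)"
     "\<forall>k\<in>{1..K}. (\<forall>u\<in>Mk k. infdist u (affine_sp (ub k) (Vb k)) \<le> eps)
                    \<and> mu_stab (Vb k) W \<le> mu"
    using adm unfolding admissible_def by blast
  have "\<forall>k\<in>{1..K}. \<exists>B. finite B \<and> Vb k = span B"
    using admk unfolding fin_dim_subspace_def by blast
  then obtain Bk where Bk: "\<And>k. k \<in> {1..K} \<Longrightarrow> finite (Bk k) \<and> Vb k = span (Bk k)"
    by metis
  have wW: "w \<in> W" unfolding w_def using PinW eta(1) sW subspace_add by blast
  define vst where "vst k = pbdw W (ub k) (Vb k) w" for k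
  have vprop: "vst k \<in> (\<lambda>z. w + z) ` orthogonal_comp W \<and>
      (\<forall>v'\<in>(\<lambda>z. w + z) ` orthogonal_comp W.
          infdist (vst k) (affine_sp (ub k) (Vb k)) \<le> infdist v' (affine_sp (ub k) (Vb k)))"
    if k: "k \<in> {1..K}" for k
    unfolding vst_def using pbdw_prop[of "Bk k" w "ub k"] Bk[OF k] wW by simp
  have em0: "eps_model \<ge> 0" using u infdist_nonneg order.trans by blast
  have en0: "eps_noise \<ge> 0" using eta(2) norm_ge_zero order.trans by blast
  obtain z where z: "z \<in> M" "infdist u M = norm (u - z)" using compact_nearest[OF M] by blast
  obtain k0 where k0: "k0 \<in> {1..K}" "z \<in> Mk k0" using z(1) Mk(1) by blast
  have zA: "infdist z (affine_sp (ub k0) (Vb k0)) \<le> eps" using Mk(2) k0 by blast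
  have "w - P z = P (u - z) + eta" unfolding w_def by (simp add: P_diff)
  then have "norm (w - P z) \<le> norm (P (u - z)) + norm eta" by (simp add: norm_triangle_ineq)
  also have "\<dots> \<le> norm (u - z) + norm eta" using P_norm_le by simp
  finally have zw: "norm (w - P z) \<le> eps_model + eps_noise" using z(2) u eta(2) by linarith
  have f0: "finite (Bk k0)" and e0: "Vb k0 = span (Bk k0)" using Bk[OF k0(1)] by auto
  have int0: "Vb k0 \<inter> orthogonal_comp W = {0}" using admk k0(1) by blast
  have mus0: "mu_stab (Vb k0) W \<le> mu" using Mk(2) k0(1) by blast
  have Vbd: "norm x \<le> mu * norm (P x)" if "x \<in> span (Bk k0)" for x
    using mu_bound[OF f0 e0 int0 mus0 mu] that e0 by blast
  have vp0: "vst k0 \<in> (\<lambda>z. w + z) ` orthogonal_comp W"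
      "\<forall>v'\<in>(\<lambda>z. w + z) ` orthogonal_comp W.
          infdist (vst k0) (affine_sp (ub k0) (span (Bk k0))) \<le> infdist v' (affine_sp (ub k0) (span (Bk k0)))"
    using vprop[OF k0(1)] e0 by simp_all
  have zA0: "infdist z (affine_sp (ub k0) (span (Bk k0))) \<le> eps" using zA e0 by simp
  have "norm (vst k0 - z) \<le> mu * (eps + (eps_model + eps_noise))"
    by (rule est_bound[OF f0 Vbd mu wW vp0 zA0 zw])
  moreover have "infdist (vst k0) M \<le> norm (vst k0 - z)"
    using infdist_le[OF z(1), of "vst k0"] by (simp add: dist_norm)
  moreover have "mu * (eps + (eps_model + eps_noise)) \<le> \<rho>"
    unfolding \<rho>_def using em0 by (simp add: algebra_simps)
  ultimately have hk0: "infdist (vst k0) M \<le> \<rho>" by linarith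
  have rho_ge: "eps_model + eps_noise \<le> \<rho>"
  proof -
    have "1 * (eps + eps_noise) \<le> mu * (eps + eps_noise)"
      using mu eps en0 by (intro mult_right_mono) auto
    moreover have "1 * eps_model \<le> (mu + 1) * eps_model"
      using mu em0 by (intro mult_right_mono) auto
    ultimately show ?thesis unfolding \<rho>_def using eps by simp
  qed
  obtain Bd where Bd: "\<And>x. x \<in> M \<Longrightarrow> norm x \<le> Bd"
    using compact_imp_bounded[OF M(1)] unfolding bounded_iff by blast
  have fin: "norm (u - v) \<le> delta M W \<sigma> + eps_noise"
    if v: "v \<in> (\<lambda>z. w + z) ` orthogonal_comp W" and vM: "infdist v M \<le> \<sigma>"
      and sg: "eps_model + eps_noise \<le> \<sigma>" for v \<sigma>
  proof -
    obtain z' where z': "z' \<in> orthogonal_comp W" "v = w + z'" using v by blast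
    have "infdist (u + eta) M \<le> infdist u M + dist (u + eta) u" by (rule infdist_triangle)
    also have "\<dots> = infdist u M + norm eta" by (simp add: dist_norm)
    finally have ue: "u + eta \<in> fattened M \<sigma>" unfolding fattened_def using u eta(2) sg by simp
    have vf: "v \<in> fattened M \<sigma>" unfolding fattened_def using vM by simp
    have "u + eta - v = (u - P u) - z'" unfolding z'(2) w_def by simp
    then have perp: "u + eta - v \<in> orthogonal_comp W" using Pperp[of u] z'(1) subspace_diff[OF sWp] by metis
    have nb: "norm x \<le> Bd + \<sigma>" if "x \<in> fattened M \<sigma>" for x
    proof -
      obtain mm where mm: "mm \<in> M" "infdist x M = norm (x - mm)" using compact_nearest[OF M] by blast
      have "norm x \<le> norm mm + norm (x - mm)" using norm_triangle_ineq[of mm "x - mm"] by simp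
      then show ?thesis using Bd[OF mm(1)] mm(2) that unfolding fattened_def by simp
    qed
    have bdd: "bdd_above {norm (a - b) | a b. a \<in> fattened M \<sigma> \<and> b \<in> fattened M \<sigma> \<and> a - b \<in> orthogonal_comp W}"
    proof (rule bdd_aboveI)
      fix x assume "x \<in> {norm (a - b) | a b. a \<in> fattened M \<sigma> \<and> b \<in> fattened M \<sigma> \<and> a - b \<in> orthogonal_comp W}"
      then obtain a b where ab: "x = norm (a - b)" "a \<in> fattened M \<sigma>" "b \<in> fattened M \<sigma>" by blast
      have "norm (a - b) \<le> norm a + norm b" by (rule norm_triangle_ineq4)
      then show "x \<le> 2 * (Bd + \<sigma>)" using nb[OF ab(2)] nb[OF ab(3)] ab(1) by simp
    qed
    have "norm (u + eta - v) \<le> delta M W \<sigma>"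
      unfolding delta_def by (rule cSup_upper[OF _ bdd]) (use ue vf perp in blast)
    moreover have "norm (u - v) \<le> norm (u + eta - v) + norm eta"
      using norm_triangle_ineq4[of "u + eta - v" eta] by simp
    ultimately show ?thesis using eta(2) by linarith
  qed
  have part1: "norm (u - vst ks) \<le> delta M W ((R / r) * \<rho>) + eps_noise"
    if ks: "ks \<in> {1..K}" and smin: "\<forall>k\<in>{1..K}. S (vst ks) \<le> S (vst k)" for ks
  proof -
    have "r * infdist (vst ks) M \<le> R * \<rho>"
    proof -
      have "r * infdist (vst ks) M \<le> S (vst ks)" by (rule S_bounds(1))
      also have "\<dots> \<le> S (vst k0)" using smin k0(1) by blast
      also have "\<dots> \<le> R * infdist (vst k0) M" by (rule S_bounds(2))
      also have "\<dots> \<le> R * \<rho>" using hk0 rR by (intro mult_left_mono) auto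
      finally show ?thesis .
    qed
    then have I: "infdist (vst ks) M \<le> (R / r) * \<rho>" using rR(1) by (simp add: pos_le_divide_eq mult.commute)
    have Rr: "1 \<le> R / r" using rR by simp
    have "1 * \<rho> \<le> (R / r) * \<rho>" using Rr rho_ge em0 en0 by (intro mult_right_mono) auto
    then show ?thesis using fin[OF conjunct1[OF vprop[OF ks]] I] rho_ge by simp
  qed
  have part2: "norm (u - vst ks) \<le> delta M W (1 * \<rho>) + eps_noise"
    if ks: "ks \<in> {1..K}" and dmin: "\<forall>k\<in>{1..K}. infdist (vst ks) M \<le> infdist (vst k) M" for ks
  proof -
    have "infdist (vst ks) M \<le> 1 * \<rho>" using dmin k0(1) hk0 by force
    then show ?thesis using fin[OF conjunct1[OF vprop[OF ks]]] rho_ge by simp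
  qed
  show ?thesis using part1 part2 unfolding vst_def by blast
qed


end
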